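(* Let $G$ be a group with finite symmetric generating set $S$ and Laplacian $\Delta$, let $R\ge1$, and let $x\in IG$ with $x^*=x$. Suppose $b\in\mathbb{R}G$ is supported in $B_{2R}$ and $x-b\in\Sigma^2_R IG$. Then for every $\varepsilon\ge 2^{2\lceil\log_2R\rceil}\|b\|_1$ we have $x+\varepsilon\Delta\in\Sigma^2_R IG$.
   Context: For a group $G$ with finite symmetric generating set $S$: $*$ is the linear involution of $\mathbb{R}G$ induced by $g\mapsto g^{-1}$; $IG$ is the augmentation ideal (kernel of $\sum_g c_gg\mapsto\sum_g c_g$); the Laplacian is $\Delta=|S|-\sum_{s\in S}s$; $B_R$ is the ball of radius $R$ about $1$ in the word metric; $\Sigma^2_R\mathbb{R}G$ is the set of finite sums $\sum_i\xi_i^*\xi_i$ with each $\xi_i$ supported in $B_R$, and $\Sigma^2_R IG=IG\cap\Sigma^2_R\mathbb{R}G$. For $b=\sum_g b_gg$, $\|b\|_1=\sum_g|b_g|$. *)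

theory Defs
  imports "HOL-Algebra.Algebra" Complex_Main
begin

definition supp :: "('a \<Rightarrow> real) \<Rightarrow> 'a set" where
  "supp a = {g. a g \<noteq> 0}"

definition grp_ring :: "('a, 'b) monoid_scheme \<Rightarrow> ('a \<Rightarrow> real) set" where
  "grp_ring G = {a. finite (supp a) \<and> supp a \<subseteq> carrier G}"

definition conv :: "('a, 'b) monoid_scheme \<Rightarrow> ('a \<Rightarrow> real) \<Rightarrow> ('a \<Rightarrow> real) \<Rightarrow> 'a \<Rightarrow> real" where
  "conv G a b = (\<lambda>g. if g \<in> carrier G then (\<Sum>h\<in>supp a. a h * b (inv\<^bsub>G\<^esub> h \<otimes>\<^bsub>G\<^esub> g)) else 0)"

definition star :: "('a, 'b) monoid_scheme \<Rightarrow> ('a \<Rightarrow> real) \<Rightarrow> 'a \<Rightarrow> real" where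
  "star G a = (\<lambda>g. if g \<in> carrier G then a (inv\<^bsub>G\<^esub> g) else 0)"

definition augmentation :: "('a \<Rightarrow> real) \<Rightarrow> real" where
  "augmentation a = (\<Sum>g\<in>supp a. a g)"

definition aug_ideal :: "('a, 'b) monoid_scheme \<Rightarrow> ('a \<Rightarrow> real) set" where
  "aug_ideal G = {a \<in> grp_ring G. augmentation a = 0}"

definition laplacian :: "('a, 'b) monoid_scheme \<Rightarrow> 'a set \<Rightarrow> 'a \<Rightarrow> real" where
  "laplacian G S = (\<lambda>g. (if g = \<one>\<^bsub>G\<^esub> then real (card S) else 0) - (if g \<in> S then 1 else 0))"

definition word_ball :: "('a, 'b) monoid_scheme \<Rightarrow> 'a set \<Rightarrow> nat \<Rightarrow> 'a set" where
  "word_ball G S R = {foldr (\<otimes>\<^bsub>G\<^esub>) xs \<one>\<^bsub>G\<^esub> | xs. set xs \<subseteq> S \<and> length xs \<le> R}"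

definition sos_R :: "('a, 'b) monoid_scheme \<Rightarrow> 'a set \<Rightarrow> nat \<Rightarrow> ('a \<Rightarrow> real) set" where
  "sos_R G S R = {x. \<exists>(n::nat) (\<xi>::nat \<Rightarrow> 'a \<Rightarrow> real).
      (\<forall>i<n. \<xi> i \<in> grp_ring G \<and> supp (\<xi> i) \<subseteq> word_ball G S R) \<and>
      x = (\<lambda>g. \<Sum>i<n. conv G (star G (\<xi> i)) (\<xi> i) g)}"

definition sos_R_IG :: "('a, 'b) monoid_scheme \<Rightarrow> 'a set \<Rightarrow> nat \<Rightarrow> ('a \<Rightarrow> real) set" where
  "sos_R_IG G S R = aug_ideal G \<inter> sos_R G S R"

definition norm1 :: "('a \<Rightarrow> real) \<Rightarrow> real" where
  "norm1 b = (\<Sum>g\<in>supp b. \<bar>b g\<bar>)"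

end

theory Submission
  imports Defs
begin



lemma sos_ext: "(\<And>y. f y = a y) \<Longrightarrow> a \<in> sos_R G S R \<Longrightarrow> f \<in> sos_R G S R"
proof -
  assume "\<And>y. f y = a y" "a \<in> sos_R G S R"
  moreover have "f = a" using calculation(1) by auto
  ultimately show ?thesis by simp
qed

lemma sos_zero: "(\<lambda>y. 0) \<in> sos_R G S R"
  unfolding sos_R_def by (rule CollectI, rule exI[of _ 0], auto)

lemma sos_add:
  fixes G :: "('a,'b) monoid_scheme"
  assumes "a \<in> sos_R G S R" "c \<in> sos_R G S R"
  shows "(\<lambda>y. a y + c y) \<in> sos_R G S R"
proof -
  obtain n1 and \<xi>1 :: "nat \<Rightarrow> 'a \<Rightarrow> real" where h1: "\<forall>i<n1. \<xi>1 i \<in> grp_ring G \<and> supp (\<xi>1 i) \<subseteq> word_ball G S R"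
    "a = (\<lambda>g. \<Sum>i<n1. conv G (star G (\<xi>1 i)) (\<xi>1 i) g)"
    using assms(1) unfolding sos_R_def by blast
  obtain n2 and \<xi>2 :: "nat \<Rightarrow> 'a \<Rightarrow> real" where h2: "\<forall>i<n2. \<xi>2 i \<in> grp_ring G \<and> supp (\<xi>2 i) \<subseteq> word_ball G S R"
    "c = (\<lambda>g. \<Sum>i<n2. conv G (star G (\<xi>2 i)) (\<xi>2 i) g)"
    using assms(2) unfolding sos_R_def by blast
  define \<xi> where "\<xi> i = (if i < n1 then \<xi>1 i else \<xi>2 (i - n1))" for i
  have P: "\<forall>i<n1+n2. \<xi> i \<in> grp_ring G \<and> supp (\<xi> i) \<subseteq> word_ball G S R"
    using h1(1) h2(1) unfolding \<xi>_def by auto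
  have E: "(\<lambda>y. a y + c y) = (\<lambda>g. \<Sum>i<n1+n2. conv G (star G (\<xi> i)) (\<xi> i) g)"
  proof
    fix g
    let ?f = "\<lambda>i. conv G (star G (\<xi> i)) (\<xi> i) g"
    have "(\<Sum>i<n1+n2. ?f i) = (\<Sum>i\<in>{0..<n1}. ?f i) + (\<Sum>i\<in>{n1..<n1+n2}. ?f i)"
      by (simp add: lessThan_atLeast0 sum.atLeastLessThan_concat)
    also have "(\<Sum>i\<in>{n1..<n1+n2}. ?f i) = (\<Sum>i\<in>{0..<n2}. ?f (i + n1))"
      using sum.shift_bounds_nat_ivl[of ?f 0 n1 n2] by (simp add: add.commute)
    finally show "a g + c g = (\<Sum>i<n1+n2. ?f i)"
      unfolding h1(2) h2(2) \<xi>_def by (simp add: lessThan_atLeast0)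
  qed
  show ?thesis unfolding sos_R_def using P E by blast
qed

lemma sos_scale:
  fixes G :: "('a,'b) monoid_scheme"
  assumes "a \<in> sos_R G S R" "0 \<le> r"
  shows "(\<lambda>y. r * a y) \<in> sos_R G S R"
proof -
  obtain n and \<xi> :: "nat \<Rightarrow> 'a \<Rightarrow> real" where h: "\<forall>i<n. \<xi> i \<in> grp_ring G \<and> supp (\<xi> i) \<subseteq> word_ball G S R"
    "a = (\<lambda>g. \<Sum>i<n. conv G (star G (\<xi> i)) (\<xi> i) g)"
    using assms(1) unfolding sos_R_def by blast
  define \<eta> where "\<eta> i = (\<lambda>y. sqrt r * \<xi> i y)" for i
  have su: "supp (\<eta> i) \<subseteq> supp (\<xi> i)" for i unfolding \<eta>_def supp_def by auto
  have P: "\<forall>i<n. \<eta> i \<in> grp_ring G \<and> supp (\<eta> i) \<subseteq> word_ball G S R"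
    using h(1) su unfolding grp_ring_def by (metis (mono_tags, lifting) finite_subset mem_Collect_eq order_trans)
  have E: "(\<lambda>y. r * a y) = (\<lambda>g. \<Sum>i<n. conv G (star G (\<eta> i)) (\<eta> i) g)"
  proof (cases "r = 0")
    case True
    then have e0: "\<eta> i = (\<lambda>y. 0)" for i unfolding \<eta>_def by simp
    have "conv G (star G (\<lambda>y. 0)) (\<lambda>y. 0) = (\<lambda>y. 0)"
      unfolding conv_def star_def supp_def by (simp add: fun_eq_iff)
    then show ?thesis unfolding e0 h(2) using True by (simp add: fun_eq_iff)
  next
    case False
    then have rp: "sqrt r \<noteq> 0" using assms(2) by auto
    have ss: "supp (star G (\<eta> i)) = supp (star G (\<xi> i))" for i
      using rp unfolding \<eta>_def supp_def star_def by auto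
    have "conv G (star G (\<eta> i)) (\<eta> i) g = r * conv G (star G (\<xi> i)) (\<xi> i) g" for i g
    proof -
      have st: "star G (\<eta> i) h = sqrt r * star G (\<xi> i) h" for h
        unfolding star_def \<eta>_def by simp
      have sr: "sqrt r * sqrt r = r" using assms(2) by simp
      have "conv G (star G (\<eta> i)) (\<eta> i) g = (if g \<in> carrier G then
          (\<Sum>h\<in>supp (star G (\<xi> i)). r * (star G (\<xi> i) h * \<xi> i (inv\<^bsub>G\<^esub> h \<otimes>\<^bsub>G\<^esub> g))) else 0)"
        unfolding conv_def ss st
      proof (intro if_cong refl sum.cong)
        fix h
        have "sqrt r * star G (\<xi> i) h * (sqrt r * \<xi> i (inv\<^bsub>G\<^esub> h \<otimes>\<^bsub>G\<^esub> g))
           = (sqrt r * sqrt r) * (star G (\<xi> i) h * \<xi> i (inv\<^bsub>G\<^esub> h \<otimes>\<^bsub>G\<^esub> g))"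
          by (simp only: mult_ac)
        then show "sqrt r * star G (\<xi> i) h * \<eta> i (inv\<^bsub>G\<^esub> h \<otimes>\<^bsub>G\<^esub> g)
           = r * (star G (\<xi> i) h * \<xi> i (inv\<^bsub>G\<^esub> h \<otimes>\<^bsub>G\<^esub> g))"
          unfolding sr \<eta>_def .
      qed
      also have "\<dots> = r * conv G (star G (\<xi> i)) (\<xi> i) g"
        unfolding conv_def by (simp add: sum_distrib_left[symmetric])
      finally show ?thesis .
    qed
    then show ?thesis unfolding h(2) by (simp add: sum_distrib_left)
  qed
  show ?thesis unfolding sos_R_def using P E by blast
qed

lemma sos_sum:
  assumes "finite I" "\<forall>i\<in>I. f i \<in> sos_R G S R"
  shows "(\<lambda>y. \<Sum>i\<in>I. f i y) \<in> sos_R G S R"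
  using assms
proof (induction I rule: finite_induct)
  case empty
  then show ?case using sos_zero by simp
next
  case (insert j I)
  then have "(\<lambda>y. f j y + (\<Sum>i\<in>I. f i y)) \<in> sos_R G S R"
    by (intro sos_add) auto
  then show ?case using insert by simp
qed

lemma sos_sq:
  assumes "\<xi> \<in> grp_ring G" "supp \<xi> \<subseteq> word_ball G S R"
  shows "conv G (star G \<xi>) \<xi> \<in> sos_R G S R"
  unfolding sos_R_def
  apply (rule CollectI, rule exI[of _ 1], rule exI[of _ "\<lambda>_. \<xi>"])
  using assms by auto




lemma if_distrib_mult: "(c::real) * ((if x = a then 1 else 0) * (if P x then 1 else 0)) = (if x = a then c * (if P a then 1 else 0) else 0)"
  by simp

lemma mult4: "(a::real) * b * (c * d) = a * c * (b * d)" by simp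

context group begin

lemma supp_star: "\<xi> \<in> grp_ring G \<Longrightarrow> supp (star G \<xi>) = (\<lambda>h. inv h) ` supp \<xi>"
proof
  assume a: "\<xi> \<in> grp_ring G"
  then have sc: "supp \<xi> \<subseteq> carrier G" unfolding grp_ring_def by simp
  show "supp (star G \<xi>) \<subseteq> (\<lambda>h. inv h) ` supp \<xi>"
  proof
    fix h assume "h \<in> supp (star G \<xi>)"
    then have h: "h \<in> carrier G" "\<xi> (inv h) \<noteq> 0" unfolding supp_def star_def
      by (simp_all split: if_split_asm)
    then have "inv h \<in> supp \<xi>" "h = inv (inv h)" by (simp_all add: supp_def)
    then show "h \<in> (\<lambda>h. inv h) ` supp \<xi>" by blast
  qed
  show "(\<lambda>h. inv h) ` supp \<xi> \<subseteq> supp (star G \<xi>)"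
  proof
    fix h assume "h \<in> (\<lambda>h. inv h) ` supp \<xi>"
    then obtain y where y: "y \<in> supp \<xi>" "h = inv y" by blast
    then have yc: "y \<in> carrier G" using sc by blast
    have "star G \<xi> h = \<xi> y" unfolding star_def y(2) using yc by simp
    then show "h \<in> supp (star G \<xi>)" using y(1) unfolding supp_def by simp
  qed
qed

lemma sqf_F:
  assumes "\<xi> \<in> grp_ring G" "finite F" "supp \<xi> \<subseteq> F" "F \<subseteq> carrier G" "g \<in> carrier G"
  shows "conv G (star G \<xi>) \<xi> g = (\<Sum>x\<in>F. \<xi> x * \<xi> (x \<otimes> g))"
proof -
  have sc: "supp \<xi> \<subseteq> carrier G" using assms(1) unfolding grp_ring_def by auto
  have inj: "inj_on (\<lambda>h. inv h) (supp \<xi>)"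
  proof (rule inj_onI)
    fix a c assume "a \<in> supp \<xi>" "c \<in> supp \<xi>" "inv a = inv c"
    then have "a \<in> carrier G" "c \<in> carrier G" "inv (inv a) = inv (inv c)" using sc by auto
    then show "a = c" by simp
  qed
  have "conv G (star G \<xi>) \<xi> g = (\<Sum>h\<in>(\<lambda>h. inv h) ` supp \<xi>. star G \<xi> h * \<xi> (inv h \<otimes> g))"
    unfolding conv_def using assms(5) supp_star[OF assms(1)] by simp
  also have "\<dots> = (\<Sum>x\<in>supp \<xi>. star G \<xi> (inv x) * \<xi> (inv (inv x) \<otimes> g))"
    by (rule sum.reindex[OF inj, unfolded comp_def])
  also have "\<dots> = (\<Sum>x\<in>supp \<xi>. \<xi> x * \<xi> (x \<otimes> g))"
  proof (rule sum.cong[OF refl])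
    fix x assume "x \<in> supp \<xi>"
    then have "x \<in> carrier G" using sc by blast
    then show "star G \<xi> (inv x) * \<xi> (inv (inv x) \<otimes> g) = \<xi> x * \<xi> (x \<otimes> g)"
      unfolding star_def by simp
  qed
  also have "\<dots> = (\<Sum>x\<in>F. \<xi> x * \<xi> (x \<otimes> g))"
    using assms(2,3) by (intro sum.mono_neutral_left) (auto simp: supp_def)
  finally show ?thesis .
qed

lemma sqf_out: "g \<notin> carrier G \<Longrightarrow> conv G a c g = 0"
  unfolding conv_def by simp

definition lin :: "nat \<Rightarrow> (nat \<Rightarrow> real) \<Rightarrow> (nat \<Rightarrow> 'a) \<Rightarrow> 'a \<Rightarrow> real" where
  "lin m c u = (\<lambda>y. \<Sum>i<m. c i * (if y = u i then 1 else 0))"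

lemma lin_supp: "supp (lin m c u) \<subseteq> u ` {..<m}"
proof
  fix x assume x: "x \<in> supp (lin m c u)"
  show "x \<in> u ` {..<m}"
  proof (rule ccontr)
    assume "x \<notin> u ` {..<m}"
    then have "\<forall>i<m. x \<noteq> u i" by auto
    then have "lin m c u x = 0" unfolding lin_def by simp
    then show False using x unfolding supp_def by simp
  qed
qed

lemma lin_ring: "u ` {..<m} \<subseteq> carrier G \<Longrightarrow> lin m c u \<in> grp_ring G"
  unfolding grp_ring_def using lin_supp[of m c u] by (auto intro: finite_subset)

lemma sqf_lin:
  assumes "u ` {..<m} \<subseteq> carrier G" "g \<in> carrier G"
  shows "conv G (star G (lin m c u)) (lin m c u) g =
     (\<Sum>i<m. \<Sum>j<m. c i * c j * (if g = inv (u i) \<otimes> u j then 1 else 0))"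
proof -
  let ?F = "u ` {..<m}"
  have "conv G (star G (lin m c u)) (lin m c u) g = (\<Sum>x\<in>?F. lin m c u x * lin m c u (x \<otimes> g))"
    by (rule sqf_F[OF lin_ring[OF assms(1)] _ lin_supp assms]) simp
  also have "\<dots> = (\<Sum>x\<in>?F. \<Sum>i<m. \<Sum>j<m. c i * c j * ((if x = u i then 1 else 0) * (if x \<otimes> g = u j then 1 else 0)))"
    unfolding lin_def sum_product by (intro sum.cong refl) (rule mult4)
  also have "\<dots> = (\<Sum>i<m. \<Sum>j<m. \<Sum>x\<in>?F. c i * c j * ((if x = u i then 1 else 0) * (if x \<otimes> g = u j then 1 else 0)))"
    by (subst sum.swap, rule sum.cong[OF refl], rule sum.swap)
  also have "\<dots> = (\<Sum>i<m. \<Sum>j<m. c i * c j * (if g = inv (u i) \<otimes> u j then 1 else 0))"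
  proof (intro sum.cong refl)
    fix i j assume i: "i \<in> {..<m}" and j: "j \<in> {..<m}"
    have ui: "u i \<in> carrier G" using assms(1) i by auto
    have eq: "(u i \<otimes> g = u j) = (g = inv (u i) \<otimes> u j)"
    proof -
      have uj: "u j \<in> carrier G" using assms(1) \<open>j \<in> {..<m}\<close> by auto
      have "(inv (u i) \<otimes> u j = g) = (u j = u i \<otimes> g)" using inv_solve_left'[of g "u i" "u j"] ui uj assms(2) by blast
      then show ?thesis by (metis)
    qed
    have "(\<Sum>x\<in>?F. c i * c j * ((if x = u i then 1 else 0) * (if x \<otimes> g = u j then 1 else 0)))
        = (\<Sum>x\<in>?F. if x = u i then c i * c j * (if u i \<otimes> g = u j then 1 else 0) else 0)"
      by (rule sum.cong[OF refl]) (case_tac "x = u i"; simp)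
    also have "\<dots> = c i * c j * (if u i \<otimes> g = u j then 1 else 0)"
      using i by (simp add: sum.delta)
    finally show "(\<Sum>x\<in>?F. c i * c j * ((if x = u i then 1 else 0) * (if x \<otimes> g = u j then 1 else 0)))
        = c i * c j * (if g = inv (u i) \<otimes> u j then 1 else 0)" using eq by simp
  qed
  finally show ?thesis .
qed

lemma sqf_sym:
  assumes "\<xi> \<in> grp_ring G" "g \<in> carrier G"
  shows "conv G (star G \<xi>) \<xi> (inv g) = conv G (star G \<xi>) \<xi> g"
proof -
  have sc: "supp \<xi> \<subseteq> carrier G" and fin: "finite (supp \<xi>)" using assms(1) unfolding grp_ring_def by auto
  let ?F = "supp \<xi> \<union> (\<lambda>y. y \<otimes> g) ` supp \<xi>"
  let ?F' = "(\<lambda>x. x \<otimes> inv g) ` ?F"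
  have Fc: "?F \<subseteq> carrier G" using sc assms(2) by auto
  have F'c: "?F' \<subseteq> carrier G" using Fc assms(2) by auto
  have sF': "supp \<xi> \<subseteq> ?F'"
  proof
    fix y assume "y \<in> supp \<xi>"
    then have "y \<otimes> g \<in> ?F" "y = (y \<otimes> g) \<otimes> inv g" using sc assms(2) by (auto simp: m_assoc)
    then show "y \<in> ?F'" by blast
  qed
  have inj: "inj_on (\<lambda>x. x \<otimes> inv g) ?F"
  proof (rule inj_onI)
    fix a c assume "a \<in> ?F" "c \<in> ?F" "a \<otimes> inv g = c \<otimes> inv g"
    moreover have "a \<in> carrier G" "c \<in> carrier G" using Fc calculation by auto
    ultimately show "a = c" using assms(2) by simp
  qed
  have "conv G (star G \<xi>) \<xi> (inv g) = (\<Sum>x\<in>?F. \<xi> x * \<xi> (x \<otimes> inv g))"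
    by (rule sqf_F) (use assms sc fin Fc in auto)
  also have "\<dots> = (\<Sum>y\<in>?F'. \<xi> (y \<otimes> g) * \<xi> y)"
    by (subst sum.reindex[OF inj]) (use Fc assms(2) in \<open>auto intro!: sum.cong simp: m_assoc\<close>)
  also have "\<dots> = conv G (star G \<xi>) \<xi> g"
    by (subst sqf_F[OF assms(1) _ sF' F'c assms(2)]) (use fin in \<open>auto simp: mult.commute\<close>)
  finally show ?thesis .
qed

end



definition ind :: "'a \<Rightarrow> 'a \<Rightarrow> real" where
  "ind y t = (if y = t then 1 else 0)"

definition Qf :: "('a, 'b) monoid_scheme \<Rightarrow> 'a \<Rightarrow> 'a \<Rightarrow> real" where
  "Qf G g = (\<lambda>y. 2 * ind y \<one>\<^bsub>G\<^esub> - ind y g - ind y (inv\<^bsub>G\<^esub> g))"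

context group begin

lemma ind_out: "y \<notin> carrier G \<Longrightarrow> t \<in> carrier G \<Longrightarrow> ind y t = 0"
  unfolding ind_def by auto

definition xi2 :: "'a \<Rightarrow> 'a \<Rightarrow> 'a \<Rightarrow> real" where
  "xi2 a b = lin (Suc (Suc 0)) (\<lambda>i. if i = 0 then 1 else -1) (\<lambda>i. if i = 0 then a else b)"

definition xi3 :: "'a \<Rightarrow> 'a \<Rightarrow> 'a \<Rightarrow> real" where
  "xi3 a b = lin (Suc (Suc (Suc 0))) (\<lambda>i. if i = 1 then -2 else 1)
      (\<lambda>i. if i = 0 then a else if i = 1 then \<one> else b)"

lemma xi2_ring: "a \<in> carrier G \<Longrightarrow> b \<in> carrier G \<Longrightarrow> xi2 a b \<in> grp_ring G"
  unfolding xi2_def by (rule lin_ring) (auto simp: lessThan_Suc)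

lemma xi2_supp: "supp (xi2 a b) \<subseteq> {a, b}"
  unfolding xi2_def using lin_supp[of "Suc (Suc 0)" _ "\<lambda>i. if i = 0 then a else b"]
  by (auto simp: lessThan_Suc)

lemma xi3_ring: "a \<in> carrier G \<Longrightarrow> b \<in> carrier G \<Longrightarrow> xi3 a b \<in> grp_ring G"
  unfolding xi3_def by (rule lin_ring) (auto simp: lessThan_Suc)

lemma xi3_supp: "supp (xi3 a b) \<subseteq> {a, \<one>, b}"
  unfolding xi3_def using lin_supp[of "Suc (Suc (Suc 0))" _ "\<lambda>i. if i = 0 then a else if i = 1 then \<one> else b"]
  by (auto simp: lessThan_Suc)

lemma sqf2:
  assumes "a \<in> carrier G" "b \<in> carrier G"
  shows "conv G (star G (xi2 a b)) (xi2 a b) y = 2 * ind y \<one> - ind y (inv a \<otimes> b) - ind y (inv b \<otimes> a)"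
proof (cases "y \<in> carrier G")
  case True
  have "conv G (star G (xi2 a b)) (xi2 a b) y = (\<Sum>i<Suc (Suc 0). \<Sum>j<Suc (Suc 0).
     (if i = 0 then 1 else -1) * (if j = 0 then 1 else -1) *
     ind y (inv (if i = 0 then a else b) \<otimes> (if j = 0 then a else b)))"
    unfolding xi2_def ind_def by (rule sqf_lin) (use assms True in \<open>auto simp: lessThan_Suc\<close>)
  also have "\<dots> = 2 * ind y \<one> - ind y (inv a \<otimes> b) - ind y (inv b \<otimes> a)"
    using assms by (simp add: lessThan_Suc)
  finally show ?thesis .
next
  case False
  then show ?thesis using assms by (simp add: sqf_out ind_out)
qed

lemma sqf3:
  assumes "a \<in> carrier G" "b \<in> carrier G"
  shows "conv G (star G (xi3 a b)) (xi3 a b) y =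
     2 * Qf G (inv a) y + 2 * Qf G b y - Qf G (inv a \<otimes> b) y"
proof (cases "y \<in> carrier G")
  case True
  have "conv G (star G (xi3 a b)) (xi3 a b) y = (\<Sum>i<Suc (Suc (Suc 0)). \<Sum>j<Suc (Suc (Suc 0)).
     (if i = 1 then -2 else 1) * (if j = 1 then -2 else 1) *
     ind y (inv (if i = 0 then a else if i = 1 then \<one> else b) \<otimes> (if j = 0 then a else if j = 1 then \<one> else b)))"
    unfolding xi3_def ind_def by (rule sqf_lin) (use assms True in \<open>auto simp: lessThan_Suc\<close>)
  also have "\<dots> = 2 * Qf G (inv a) y + 2 * Qf G b y - Qf G (inv a \<otimes> b) y"
    using assms by (simp add: lessThan_Suc Qf_def inv_mult_group)
  finally show ?thesis .
next
  case False
  then show ?thesis using assms by (simp add: sqf_out ind_out Qf_def)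
qed

end



lemma noadj_count:
  "(\<forall>p q. w \<noteq> p @ t # t # q) \<Longrightarrow> 2 * count_list w t \<le> length w + 1"
proof (induction w rule: induct_list012)
  case 1 then show ?case by simp
next
  case (2 x) then show ?case by simp
next
  case (3 x y zs)
  show ?case
  proof (cases "x = t")
    case True
    then have yt: "y \<noteq> t" using "3.prems"[rule_format, of "[]" zs] by auto
    have "\<forall>p q. zs \<noteq> p @ t # t # q"
    proof (intro allI notI)
      fix p q assume "zs = p @ t # t # q"
      then have "x # y # zs = (x # y # p) @ t # t # q" by simp
      then show False using "3.prems" by blast
    qed
    then have "2 * count_list zs t \<le> length zs + 1" using "3.IH"(1) by blast
    then show ?thesis using True yt by simp
  next
    case False
    have "\<forall>p q. y # zs \<noteq> p @ t # t # q"
    proof (intro allI notI)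
      fix p q assume "y # zs = p @ t # t # q"
      then have "x # y # zs = (x # p) @ t # t # q" by simp
      then show False using "3.prems" by blast
    qed
    then have "2 * count_list (y # zs) t \<le> length (y # zs) + 1" using "3.IH"(2) by blast
    then show ?thesis using False by simp
  qed
qed

lemma count_two: "t \<noteq> t' \<Longrightarrow> count_list w t + count_list w t' \<le> length w"
  by (induction w) auto

lemma count_le: "count_list w t \<le> length w"
  by (induction w) auto

lemma sum_list_count:
  assumes "finite S" "set w \<subseteq> S"
  shows "sum_list (map f w) = (\<Sum>t\<in>S. real (count_list w t) * (f t :: real))"
  using assms(2)
proof (induction w)
  case Nil then show ?case by simp
next
  case (Cons x w)
  then have xS: "x \<in> S" and IH: "sum_list (map f w) = (\<Sum>t\<in>S. real (count_list w t) * f t)" by auto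
  have "(\<Sum>t\<in>S. real (count_list (x # w) t) * f t) = (\<Sum>t\<in>S. real (count_list w t) * f t + (if x = t then f t else 0))"
    by (intro sum.cong refl) (auto simp: algebra_simps)
  also have "\<dots> = (\<Sum>t\<in>S. real (count_list w t) * f t) + f x"
    using assms(1) xS by (simp add: sum.distrib)
  finally show ?case using IH by simp
qed

context group begin

lemma foldr_closed: "set xs \<subseteq> carrier G \<Longrightarrow> z \<in> carrier G \<Longrightarrow> foldr (\<otimes>) xs z \<in> carrier G"
  by (induction xs) auto

lemma foldr_mult: "set xs \<subseteq> carrier G \<Longrightarrow> z \<in> carrier G \<Longrightarrow> foldr (\<otimes>) xs z = foldr (\<otimes>) xs \<one> \<otimes> z"
proof (induction xs)
  case Nil then show ?case by simp
next
  case (Cons x xs)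
  then have "x \<in> carrier G" "set xs \<subseteq> carrier G" by auto
  with Cons show ?case by (simp add: m_assoc foldr_closed)
qed

lemma prod_append: "set xs \<subseteq> carrier G \<Longrightarrow> set ys \<subseteq> carrier G \<Longrightarrow>
   foldr (\<otimes>) (xs @ ys) \<one> = foldr (\<otimes>) xs \<one> \<otimes> foldr (\<otimes>) ys \<one>"
proof -
  assume a: "set xs \<subseteq> carrier G" "set ys \<subseteq> carrier G"
  have "foldr (\<otimes>) xs (foldr (\<otimes>) ys \<one>) = foldr (\<otimes>) xs \<one> \<otimes> foldr (\<otimes>) ys \<one>"
    by (rule foldr_mult[OF a(1) foldr_closed[OF a(2) one_closed]])
  then show ?thesis by simp
qed

lemma prod_inv: "set xs \<subseteq> carrier G \<Longrightarrow> foldr (\<otimes>) (rev (map (\<lambda>z. inv z) xs)) \<one> = inv (foldr (\<otimes>) xs \<one>)"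
proof (induction xs)
  case Nil then show ?case by simp
next
  case (Cons x xs)
  then have x: "x \<in> carrier G" and xs: "set xs \<subseteq> carrier G" by auto
  have s1: "set (rev (map (\<lambda>z. inv z) xs)) \<subseteq> carrier G" using xs by auto
  have "foldr (\<otimes>) (rev (map (\<lambda>z. inv z) (x # xs))) \<one> = foldr (\<otimes>) (rev (map (\<lambda>z. inv z) xs)) \<one> \<otimes> foldr (\<otimes>) [inv x] \<one>"
    using prod_append[OF s1, of "[inv x]"] x by simp
  also have "\<dots> = inv (foldr (\<otimes>) xs \<one>) \<otimes> inv x" using Cons x by simp
  also have "\<dots> = inv (x \<otimes> foldr (\<otimes>) xs \<one>)" using x xs by (simp add: inv_mult_group foldr_closed)
  finally show ?case by simp
qed

end

locale sos_setting = group +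
  fixes S :: "'a set" and R :: nat
  assumes finS: "finite S" and Sc: "S \<subseteq> carrier G" and Ssym: "\<forall>s\<in>S. inv\<^bsub>G\<^esub> s \<in> S"
    and R1: "R \<ge> 1"
begin

lemma ball_iff: "g \<in> word_ball G S n \<longleftrightarrow> (\<exists>xs. g = foldr (\<otimes>) xs \<one> \<and> set xs \<subseteq> S \<and> length xs \<le> n)"
  unfolding word_ball_def by (simp only: mem_Collect_eq)

lemma ball_carrier: "g \<in> word_ball G S n \<Longrightarrow> g \<in> carrier G"
proof -
  assume "g \<in> word_ball G S n"
  then obtain xs where xs: "g = foldr (\<otimes>) xs \<one>" "set xs \<subseteq> S" unfolding ball_iff by blast
  have "set xs \<subseteq> carrier G" using xs(2) Sc by blast
  then show ?thesis using xs(1) foldr_closed by simp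
qed

lemma ball_one: "\<one> \<in> word_ball G S n"
  unfolding ball_iff by (rule exI[of _ "[]"]) simp

lemma ball_gen: "t \<in> S \<Longrightarrow> n \<ge> 1 \<Longrightarrow> t \<in> word_ball G S n"
proof -
  assume "t \<in> S" "n \<ge> 1"
  moreover have "t = foldr (\<otimes>) [t] \<one>" using calculation Sc by auto
  ultimately show ?thesis unfolding ball_iff by (intro exI[of _ "[t]"]) auto
qed

lemma ball_inv: "g \<in> word_ball G S n \<Longrightarrow> inv g \<in> word_ball G S n"
proof -
  assume "g \<in> word_ball G S n"
  then obtain xs where xs: "g = foldr (\<otimes>) xs \<one>" "set xs \<subseteq> S" "length xs \<le> n" by (auto simp: ball_iff)
  have "inv g = foldr (\<otimes>) (rev (map (\<lambda>z. inv z) xs)) \<one>" using xs Sc prod_inv[of xs] by auto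
  moreover have "set (rev (map (\<lambda>z. inv z) xs)) \<subseteq> S" using xs(2) Ssym by auto
  ultimately show ?thesis unfolding ball_iff using xs(3) by (intro exI[of _ "rev (map (\<lambda>z. inv z) xs)"]) auto
qed

lemma ball_split: "g \<in> word_ball G S (2 * R) \<Longrightarrow> \<exists>h k. h \<in> word_ball G S R \<and> k \<in> word_ball G S R \<and> g = h \<otimes> k"
proof -
  assume "g \<in> word_ball G S (2 * R)"
  then obtain xs where xs: "g = foldr (\<otimes>) xs \<one>" "set xs \<subseteq> S" "length xs \<le> 2 * R" by (auto simp: ball_iff)
  let ?h = "foldr (\<otimes>) (take R xs) \<one>" and ?k = "foldr (\<otimes>) (drop R xs) \<one>"
  have s1: "set (take R xs) \<subseteq> S" "set (drop R xs) \<subseteq> S" using xs(2) by (auto dest: in_set_takeD in_set_dropD)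
  have "g = ?h \<otimes> ?k" using xs(1) prod_append[of "take R xs" "drop R xs"] s1 Sc by auto
  moreover have "?h \<in> word_ball G S R" unfolding ball_iff using s1 by (intro exI[of _ "take R xs"]) auto
  moreover have "?k \<in> word_ball G S R" unfolding ball_iff using s1 xs(3) by (intro exI[of _ "drop R xs"]) auto
  ultimately show ?thesis by blast
qed

lemma Q_sos: "g \<in> word_ball G S (2 * R) \<Longrightarrow> Qf G g \<in> sos_R G S R"
proof -
  assume "g \<in> word_ball G S (2 * R)"
  then obtain h k where hk: "h \<in> word_ball G S R" "k \<in> word_ball G S R" "g = h \<otimes> k"
    using ball_split by blast
  have c: "h \<in> carrier G" "k \<in> carrier G" using hk ball_carrier by auto
  have ih: "inv h \<in> word_ball G S R" using ball_inv hk by simp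
  have e: "Qf G g y = conv G (star G (xi2 (inv h) k)) (xi2 (inv h) k) y" for y
    unfolding sqf2[OF inv_closed[OF c(1)] c(2)] Qf_def using c hk(3) by (simp add: inv_mult_group)
  have m: "conv G (star G (xi2 (inv h) k)) (xi2 (inv h) k) \<in> sos_R G S R"
    by (rule sos_sq) (use xi2_ring[OF inv_closed[OF c(1)] c(2)] xi2_supp[of "inv h" k] ih hk(2) in auto)
  show ?thesis by (rule sos_ext[OF e m])
qed

lemma E_sos: "h \<in> word_ball G S R \<Longrightarrow> k \<in> word_ball G S R \<Longrightarrow>
   (\<lambda>y. 2 * Qf G h y + 2 * Qf G k y - Qf G (h \<otimes> k) y) \<in> sos_R G S R"
proof -
  assume hk: "h \<in> word_ball G S R" "k \<in> word_ball G S R"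
  have c: "h \<in> carrier G" "k \<in> carrier G" using hk ball_carrier by auto
  have ih: "inv h \<in> word_ball G S R" using ball_inv hk by simp
  have e: "2 * Qf G h y + 2 * Qf G k y - Qf G (h \<otimes> k) y = conv G (star G (xi3 (inv h) k)) (xi3 (inv h) k) y" for y
    unfolding sqf3[OF inv_closed[OF c(1)] c(2)] using c by simp
  have m: "conv G (star G (xi3 (inv h) k)) (xi3 (inv h) k) \<in> sos_R G S R"
    by (rule sos_sq) (use xi3_ring[OF inv_closed[OF c(1)] c(2)] xi3_supp[of "inv h" k] ih hk(2) ball_one in auto)
  show ?thesis by (rule sos_ext[OF e m])
qed

lemma Qf_inv: "t \<in> carrier G \<Longrightarrow> Qf G (inv t) = Qf G t"
  unfolding Qf_def by (auto simp: fun_eq_iff)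

lemma Qf_one: "Qf G \<one> = (\<lambda>y. 0)"
  unfolding Qf_def by (auto simp: fun_eq_iff)

end



context sos_setting begin

lemma inv_inj_S: "inj_on (\<lambda>t. inv t) S"
proof (rule inj_onI)
  fix a c assume "a \<in> S" "c \<in> S" "inv a = inv c"
  then have "a \<in> carrier G" "c \<in> carrier G" "inv (inv a) = inv (inv c)" using Sc by auto
  then show "a = c" by simp
qed

lemma inv_image_S: "(\<lambda>t. inv t) ` S = S"
proof
  show "(\<lambda>t. inv t) ` S \<subseteq> S" using Ssym by auto
  show "S \<subseteq> (\<lambda>t. inv t) ` S"
  proof
    fix t assume t: "t \<in> S"
    then have "t = inv (inv t)" "inv t \<in> S" using Sc Ssym by auto
    then show "t \<in> (\<lambda>t. inv t) ` S" by blast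
  qed
qed

lemma sum_inv: "(\<Sum>t\<in>S. f (inv t)) = (\<Sum>t\<in>S. f t)"
proof -
  have "(\<Sum>t\<in>(\<lambda>t. inv t) ` S. f t) = (\<Sum>t\<in>S. f (inv t))"
    by (rule sum.reindex[OF inv_inj_S, unfolded comp_def])
  then show ?thesis unfolding inv_image_S by simp
qed

lemma lap: "laplacian G S y = (1/2) * (\<Sum>t\<in>S. Qf G t y)"
proof -
  have a: "(\<Sum>t\<in>S. ind y t) = (if y \<in> S then 1 else 0)"
    unfolding ind_def using finS by (simp add: sum.delta)
  have b: "(\<Sum>t\<in>S. ind y (inv t)) = (\<Sum>t\<in>S. ind y t)" by (rule sum_inv)
  have "(\<Sum>t\<in>S. Qf G t y) = (\<Sum>t\<in>S. 2 * ind y \<one>) - (\<Sum>t\<in>S. ind y t) - (\<Sum>t\<in>S. ind y (inv t))"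
    unfolding Qf_def by (simp add: sum_subtractf)
  also have "\<dots> = 2 * real (card S) * ind y \<one> - 2 * (if y \<in> S then 1 else 0)"
    unfolding b a by simp
  finally show ?thesis unfolding laplacian_def ind_def by simp
qed

lemma Qt_sos: "t \<in> S \<Longrightarrow> Qf G t \<in> sos_R G S R"
  using Q_sos ball_gen R1 by simp

lemma short_sos:
  assumes "set w \<subseteq> S" "length w \<le> 1" "(c::real) \<ge> 1"
  shows "(\<lambda>y. c * sum_list (map (\<lambda>s. Qf G s y) w) - Qf G (foldr (\<otimes>) w \<one>) y) \<in> sos_R G S R"
proof (cases w)
  case Nil
  then show ?thesis using sos_zero by (simp add: Qf_one)
next
  case (Cons s w')
  then have w: "w = [s]" using assms(2) by simp
  have s: "s \<in> S" "s \<in> carrier G" using assms(1) w Sc by auto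
  have "(\<lambda>y. (c - 1) * Qf G s y) \<in> sos_R G S R"
    by (rule sos_scale[OF Qt_sos[OF s(1)]]) (use assms(3) in simp)
  then show ?thesis
    by (rule sos_ext[rotated]) (simp add: w s algebra_simps)
qed

lemma dyadic:
  "set w \<subseteq> S \<Longrightarrow> length w \<le> 2 ^ d \<Longrightarrow> length w \<le> 2 * R \<Longrightarrow>
   (\<lambda>y. 2 ^ d * sum_list (map (\<lambda>s. Qf G s y) w) - Qf G (foldr (\<otimes>) w \<one>) y) \<in> sos_R G S R"
proof (induction d arbitrary: w)
  case 0
  then show ?case using short_sos[of w 1] by simp
next
  case (Suc d)
  show ?case
  proof (cases "length w \<le> 1")
    case True
    have "(1::real) \<le> 2 ^ Suc d" by (rule one_le_power) simp
    then show ?thesis using short_sos[of w "2 ^ Suc d"] Suc.prems True by blast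
  next
    case False
    define n where "n = length w div 2"
    define u where "u = take n w"
    define v where "v = drop n w"
    have wuv: "w = u @ v" unfolding u_def v_def by simp
    have lu: "length u = n" unfolding u_def n_def by simp
    have lv: "length v = length w - n" unfolding v_def by simp
    have su: "set u \<subseteq> S" "set v \<subseteq> S" using Suc.prems(1) wuv by auto
    have uc: "set u \<subseteq> carrier G" "set v \<subseteq> carrier G" using su Sc by auto
    have l1: "length u \<le> 2 ^ d" "length v \<le> 2 ^ d" using Suc.prems(2) lu lv unfolding n_def by auto
    have l2: "length u \<le> R" "length v \<le> R" using Suc.prems(3) lu lv unfolding n_def by auto
    have IHu: "(\<lambda>y. 2 ^ d * sum_list (map (\<lambda>s. Qf G s y) u) - Qf G (foldr (\<otimes>) u \<one>) y) \<in> sos_R G S R"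
      using Suc.IH[OF su(1) l1(1)] l2(1) by simp
    have IHv: "(\<lambda>y. 2 ^ d * sum_list (map (\<lambda>s. Qf G s y) v) - Qf G (foldr (\<otimes>) v \<one>) y) \<in> sos_R G S R"
      using Suc.IH[OF su(2) l1(2)] l2(2) by simp
    let ?h = "foldr (\<otimes>) u \<one>" and ?k = "foldr (\<otimes>) v \<one>"
    have hb: "?h \<in> word_ball G S R" unfolding ball_iff using su l2 by blast
    have kb: "?k \<in> word_ball G S R" unfolding ball_iff using su l2 by blast
    have E: "(\<lambda>y. 2 * Qf G ?h y + 2 * Qf G ?k y - Qf G (?h \<otimes> ?k) y) \<in> sos_R G S R"
      by (rule E_sos[OF hb kb])
    have pw: "foldr (\<otimes>) w \<one> = ?h \<otimes> ?k" unfolding wuv by (rule prod_append[OF uc])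
    have A: "(\<lambda>y. 2 * (2 ^ d * sum_list (map (\<lambda>s. Qf G s y) u) - Qf G (foldr (\<otimes>) u \<one>) y)) \<in> sos_R G S R"
      by (rule sos_scale[OF IHu]) simp
    have B: "(\<lambda>y. 2 * (2 ^ d * sum_list (map (\<lambda>s. Qf G s y) v) - Qf G (foldr (\<otimes>) v \<one>) y)) \<in> sos_R G S R"
      by (rule sos_scale[OF IHv]) simp
    have AB: "(\<lambda>y. 2 * (2 ^ d * sum_list (map (\<lambda>s. Qf G s y) u) - Qf G (foldr (\<otimes>) u \<one>) y)
        + 2 * (2 ^ d * sum_list (map (\<lambda>s. Qf G s y) v) - Qf G (foldr (\<otimes>) v \<one>) y)) \<in> sos_R G S R"
      by (rule sos_add[OF A B])
    have ABE: "(\<lambda>y. (2 * (2 ^ d * sum_list (map (\<lambda>s. Qf G s y) u) - Qf G (foldr (\<otimes>) u \<one>) y)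
        + 2 * (2 ^ d * sum_list (map (\<lambda>s. Qf G s y) v) - Qf G (foldr (\<otimes>) v \<one>) y))
        + (2 * Qf G ?h y + 2 * Qf G ?k y - Qf G (?h \<otimes> ?k) y)) \<in> sos_R G S R"
      by (rule sos_add[OF AB E])
    show ?thesis
      by (rule sos_ext[OF _ ABE]) (simp only: pw, simp add: wuv algebra_simps)
  qed
qed

end



context sos_setting begin

lemma minword:
  assumes "g \<in> word_ball G S (2 * R)"
  shows "\<exists>w. set w \<subseteq> S \<and> length w \<le> 2 * R \<and> foldr (\<otimes>) w \<one> = g \<and>
     (\<forall>t\<in>S. inv t = t \<longrightarrow> count_list w t \<le> R)"
proof -
  let ?P = "\<lambda>w. set w \<subseteq> S \<and> length w \<le> 2 * R \<and> foldr (\<otimes>) w \<one> = g"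
  obtain w0 where "?P w0" using assms unfolding ball_iff by blast
  then obtain w where P: "?P w" and min: "\<forall>w'. ?P w' \<longrightarrow> length w \<le> length w'"
    using ex_has_least_nat[of ?P w0 length] by blast
  have "count_list w t \<le> R" if t: "t \<in> S" "inv t = t" for t
  proof -
    have tc: "t \<in> carrier G" using t Sc by auto
    have tt: "t \<otimes> t = \<one>" using t(2) tc r_inv[OF tc] by simp
    have "\<forall>p q. w \<noteq> p @ t # t # q"
    proof (intro allI notI)
      fix p q assume wpq: "w = p @ t # t # q"
      have sp: "set p \<subseteq> carrier G" "set (t # t # q) \<subseteq> carrier G" "set q \<subseteq> carrier G"
        using P wpq Sc by auto
      have "foldr (\<otimes>) (t # t # q) \<one> = foldr (\<otimes>) q \<one>"
        using tc foldr_closed[OF sp(3) one_closed] tt by (simp add: m_assoc[symmetric])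
      then have "foldr (\<otimes>) (p @ q) \<one> = g"
        using P wpq prod_append[OF sp(1) sp(2)] prod_append[OF sp(1) sp(3)] by simp
      moreover have "set (p @ q) \<subseteq> S" "length (p @ q) \<le> 2 * R" using P wpq by auto
      ultimately have "length w \<le> length (p @ q)" using min by blast
      then show False using wpq by simp
    qed
    then have "2 * count_list w t \<le> length w + 1" by (rule noadj_count)
    then show ?thesis using P by simp
  qed
  then show ?thesis using P by blast
qed

lemma core:
  assumes g: "g \<in> word_ball G S (2 * R)" and K: "R \<le> 2 ^ k"
  shows "(\<lambda>y. 4 * (2 ^ k) ^ 2 * laplacian G S y - Qf G g y) \<in> sos_R G S R"
proof -
  obtain w where w: "set w \<subseteq> S" "length w \<le> 2 * R" "foldr (\<otimes>) w \<one> = g"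
     and cnt: "\<forall>t\<in>S. inv t = t \<longrightarrow> count_list w t \<le> R"
    using minword[OF g] by blast
  define K :: real where "K = 2 ^ k"
  define m where "m t = (real (count_list w t) + real (count_list w (inv t))) / 2" for t
  have mK: "m t \<le> K" if t: "t \<in> S" for t
  proof (cases "inv t = t")
    case True
    then have "count_list w t \<le> R" using cnt t by blast
    then have "real (count_list w t) \<le> K" using K unfolding K_def
      by (metis of_nat_le_iff of_nat_numeral of_nat_power order_trans)
    then show ?thesis unfolding m_def using True by simp
  next
    case False
    then have "count_list w t + count_list w (inv t) \<le> 2 * 2 ^ k"
    proof -
      have "t \<noteq> inv t" using False by simp
      then have "count_list w t + count_list w (inv t) \<le> length w" by (rule count_two)
      then show ?thesis using w(2) K by linarith
    qed
    then have "real (count_list w t + count_list w (inv t)) \<le> 2 * K" unfolding K_def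
      by (metis of_nat_le_iff of_nat_mult of_nat_numeral of_nat_power)
    then show ?thesis unfolding m_def by simp
  qed
  have QS: "sum_list (map (\<lambda>s. Qf G s y) w) = (\<Sum>t\<in>S. m t * Qf G t y)" for y
  proof -
    have a: "sum_list (map (\<lambda>s. Qf G s y) w) = (\<Sum>t\<in>S. real (count_list w t) * Qf G t y)"
      by (rule sum_list_count[OF finS w(1)])
    have "(\<Sum>t\<in>S. real (count_list w t) * Qf G t y) = (\<Sum>t\<in>S. real (count_list w (inv t)) * Qf G (inv t) y)"
      by (rule sum_inv[symmetric])
    also have "\<dots> = (\<Sum>t\<in>S. real (count_list w (inv t)) * Qf G t y)"
      using Sc by (intro sum.cong refl) (simp add: Qf_inv subset_iff)
    finally have b: "(\<Sum>t\<in>S. real (count_list w t) * Qf G t y) = (\<Sum>t\<in>S. real (count_list w (inv t)) * Qf G t y)" .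
    have "(\<Sum>t\<in>S. m t * Qf G t y) = ((\<Sum>t\<in>S. real (count_list w t) * Qf G t y) + (\<Sum>t\<in>S. real (count_list w (inv t)) * Qf G t y)) / 2"
      unfolding m_def by (simp add: sum.distrib[symmetric] sum_divide_distrib algebra_simps)
    then show ?thesis using a b by simp
  qed
  have lw: "length w \<le> 2 ^ Suc k" using w(2) K by simp
  have D: "(\<lambda>y. 2 ^ Suc k * sum_list (map (\<lambda>s. Qf G s y) w) - Qf G g y) \<in> sos_R G S R"
    using dyadic[OF w(1) lw w(2)] w(3) by simp
  have E: "(\<lambda>y. \<Sum>t\<in>S. (K - m t) * Qf G t y) \<in> sos_R G S R"
  proof (rule sos_sum[OF finS], intro ballI)
    fix t assume t: "t \<in> S"
    show "(\<lambda>y. (K - m t) * Qf G t y) \<in> sos_R G S R"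
      by (rule sos_scale[OF Qt_sos[OF t]]) (use mK[OF t] in simp)
  qed
  have E2: "(\<lambda>y. (2 * K) * (\<Sum>t\<in>S. (K - m t) * Qf G t y)) \<in> sos_R G S R"
    by (rule sos_scale[OF E]) (simp add: K_def)
  have DE: "(\<lambda>y. (2 ^ Suc k * sum_list (map (\<lambda>s. Qf G s y) w) - Qf G g y) + (2 * K) * (\<Sum>t\<in>S. (K - m t) * Qf G t y)) \<in> sos_R G S R"
    by (rule sos_add[OF D E2])
  show ?thesis
  proof (rule sos_ext[OF _ DE])
    fix y
    have s: "(\<Sum>t\<in>S. (K - m t) * Qf G t y) = K * (\<Sum>t\<in>S. Qf G t y) - (\<Sum>t\<in>S. m t * Qf G t y)"
      by (simp add: sum_subtractf sum_distrib_left algebra_simps)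
    show "4 * (2 ^ k) ^ 2 * laplacian G S y - Qf G g y = (2 ^ Suc k * sum_list (map (\<lambda>s. Qf G s y) w) - Qf G g y) + (2 * K) * (\<Sum>t\<in>S. (K - m t) * Qf G t y)"
      unfolding QS lap K_def by (simp add: sum_subtractf sum_distrib_left sum_distrib_right algebra_simps power2_eq_square)
  qed
qed

end



lemma aug_eq: "finite F \<Longrightarrow> supp f \<subseteq> F \<Longrightarrow> augmentation f = sum f F"
  unfolding augmentation_def by (rule sum.mono_neutral_left) (auto simp: supp_def)

context group begin

lemma decomp:
  assumes br: "b \<in> grp_ring G" and bs: "\<forall>g\<in>carrier G. b (inv g) = b g"
    and b0: "(\<Sum>g\<in>supp b. b g) = 0"
  shows "(\<Sum>g\<in>supp b - {\<one>}. (- b g / 2) * Qf G g y) = b y"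
proof -
  let ?A = "supp b - {\<one>}"
  have sc: "supp b \<subseteq> carrier G" and fin: "finite (supp b)" using br unfolding grp_ring_def by auto
  have finA: "finite ?A" using fin by simp
  have Ac: "?A \<subseteq> carrier G" using sc by auto
  have inj: "inj_on (\<lambda>t. inv t) ?A"
  proof (rule inj_onI)
    fix a c assume "a \<in> ?A" "c \<in> ?A" "inv a = inv c"
    then have "a \<in> carrier G" "c \<in> carrier G" "inv (inv a) = inv (inv c)" using Ac by auto
    then show "a = c" by simp
  qed
  have imA: "(\<lambda>t. inv t) ` ?A = ?A"
  proof
    show "(\<lambda>t. inv t) ` ?A \<subseteq> ?A"
    proof
      fix h assume "h \<in> (\<lambda>t. inv t) ` ?A"
      then obtain t where t: "t \<in> ?A" "h = inv t" by blast
      then have tc: "t \<in> carrier G" using Ac by auto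
      have "b h \<noteq> 0" using t tc bs unfolding supp_def by auto
      moreover have "h \<noteq> \<one>" using t tc by auto
      ultimately show "h \<in> ?A" unfolding supp_def by simp
    qed
    show "?A \<subseteq> (\<lambda>t. inv t) ` ?A"
    proof
      fix t assume t: "t \<in> ?A"
      then have tc: "t \<in> carrier G" using Ac by auto
      have "b (inv t) \<noteq> 0" using t tc bs unfolding supp_def by auto
      moreover have "inv t \<noteq> \<one>" using t tc by auto
      ultimately have "inv t \<in> ?A" unfolding supp_def by simp
      moreover have "t = inv (inv t)" using tc by simp
      ultimately show "t \<in> (\<lambda>t. inv t) ` ?A" by blast
    qed
  qed
  have r1: "(\<Sum>g\<in>?A. b g * ind y (inv g)) = (\<Sum>g\<in>?A. b g * ind y g)"
  proof -
    have "(\<Sum>g\<in>?A. b g * ind y (inv g)) = (\<Sum>g\<in>?A. b (inv g) * ind y (inv g))"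
      using Ac bs by (intro sum.cong refl) auto
    also have "\<dots> = (\<Sum>h\<in>(\<lambda>t. inv t) ` ?A. b h * ind y h)"
      by (rule sum.reindex[OF inj, unfolded comp_def, symmetric])
    finally show ?thesis unfolding imA .
  qed
  have r2: "(\<Sum>g\<in>?A. b g * ind y g) = (if y \<in> ?A then b y else 0)"
  proof -
    have "(\<Sum>g\<in>?A. b g * ind y g) = (\<Sum>g\<in>?A. if y = g then b g else 0)"
      by (intro sum.cong refl) (simp add: ind_def)
    also have "\<dots> = (if y \<in> ?A then b y else 0)" using finA by (rule sum.delta')
    finally show ?thesis .
  qed
  have r3: "(\<Sum>g\<in>?A. b g) = - b \<one>"
    using b0 fin by (simp add: sum_diff1 supp_def)
  have "(\<Sum>g\<in>?A. (- b g / 2) * Qf G g y) =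
      - (\<Sum>g\<in>?A. b g) * ind y \<one> + (1/2) * (\<Sum>g\<in>?A. b g * ind y g) + (1/2) * (\<Sum>g\<in>?A. b g * ind y (inv g))"
    unfolding Qf_def by (simp add: sum_distrib_left sum_distrib_right sum.distrib sum_subtractf algebra_simps sum_divide_distrib)
  also have "\<dots> = b y"
    unfolding r1 r2 r3 by (cases "y = \<one>"; cases "y \<in> supp b") (auto simp: ind_def supp_def)
  finally show ?thesis .
qed

end

theorem lemma4p10:
  fixes G :: "('a, 'b) monoid_scheme" and S :: "'a set" and R :: nat
    and x b :: "'a \<Rightarrow> real" and \<epsilon> :: real
  assumes "group G"
    and "finite S" and "S \<subseteq> carrier G" and "\<forall>s\<in>S. inv\<^bsub>G\<^esub> s \<in> S"
    and "generate G S = carrier G"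
    and "R \<ge> 1"
    and "x \<in> aug_ideal G" and "star G x = x"
    and "b \<in> grp_ring G" and "supp b \<subseteq> word_ball G S (2 * R)"
    and "(\<lambda>g. x g - b g) \<in> sos_R_IG G S R"
    and "\<epsilon> \<ge> 2 powr (2 * of_int \<lceil>log 2 (real R)\<rceil>) * norm1 b"
  shows "(\<lambda>g. x g + \<epsilon> * laplacian G S g) \<in> sos_R_IG G S R"
proof -
  interpret sos_setting G S R
    by (intro sos_setting.intro assms(1) sos_setting_axioms.intro) (use assms in auto)
  define \<sigma> where "\<sigma> = (\<lambda>g. x g - b g)"
  have \<sigma>sos: "\<sigma> \<in> sos_R G S R" and \<sigma>aug: "\<sigma> \<in> aug_ideal G"
    using assms(11) unfolding \<sigma>_def sos_R_IG_def by auto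
  have xr: "x \<in> grp_ring G" and xa: "augmentation x = 0" using assms(7) unfolding aug_ideal_def by auto
  have xfin: "finite (supp x)" "supp x \<subseteq> carrier G" using xr unfolding grp_ring_def by auto
  have bfin: "finite (supp b)" "supp b \<subseteq> carrier G" using assms(9) unfolding grp_ring_def by auto
  obtain n and \<xi> :: "nat \<Rightarrow> 'a \<Rightarrow> real" where \<xi>: "\<forall>i<n. \<xi> i \<in> grp_ring G \<and> supp (\<xi> i) \<subseteq> word_ball G S R"
    "\<sigma> = (\<lambda>g. \<Sum>i<n. conv G (star G (\<xi> i)) (\<xi> i) g)"
    using \<sigma>sos unfolding sos_R_def by blast
  have \<sigma>sym: "\<sigma> (inv\<^bsub>G\<^esub> g) = \<sigma> g" if g: "g \<in> carrier G" for g
    unfolding \<xi>(2) using \<xi>(1) g by (intro sum.cong refl) (simp add: sqf_sym)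
  have xsym: "x (inv\<^bsub>G\<^esub> g) = x g" if g: "g \<in> carrier G" for g
    using fun_cong[OF assms(8), of g] g unfolding star_def by simp
  have bsym: "\<forall>g\<in>carrier G. b (inv\<^bsub>G\<^esub> g) = b g"
  proof
    fix g assume g: "g \<in> carrier G"
    have "b g = x g - \<sigma> g" "b (inv\<^bsub>G\<^esub> g) = x (inv\<^bsub>G\<^esub> g) - \<sigma> (inv\<^bsub>G\<^esub> g)" unfolding \<sigma>_def by auto
    then show "b (inv\<^bsub>G\<^esub> g) = b g" using \<sigma>sym[OF g] xsym[OF g] by simp
  qed
  define F where "F = supp x \<union> supp b"
  have Ffin: "finite F" using xfin bfin unfolding F_def by auto
  have "supp \<sigma> \<subseteq> F" unfolding F_def \<sigma>_def supp_def by auto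
  then have "augmentation \<sigma> = sum \<sigma> F" by (rule aug_eq[OF Ffin])
  moreover have "augmentation \<sigma> = 0" using \<sigma>aug unfolding aug_ideal_def by simp
  moreover have "augmentation x = sum x F" by (rule aug_eq[OF Ffin]) (auto simp: F_def)
  ultimately have "sum b F = 0" using xa unfolding \<sigma>_def by (simp add: sum_subtractf)
  moreover have "sum b F = (\<Sum>g\<in>supp b. b g)"
    using Ffin unfolding F_def by (intro sum.mono_neutral_right) (auto simp: supp_def)
  ultimately have b0: "(\<Sum>g\<in>supp b. b g) = 0" by simp
  define k where "k = nat \<lceil>log 2 (real R)\<rceil>"
  have lg0: "log 2 (real R) \<ge> 0" using assms(6) by simp
  have kk: "(of_int \<lceil>log 2 (real R)\<rceil> :: real) = real k" unfolding k_def using lg0 by simp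
  have pw: "(2::real) powr (2 * of_int \<lceil>log 2 (real R)\<rceil>) = (2 ^ k) ^ 2"
  proof -
    have "(2::real) powr (2 * of_int \<lceil>log 2 (real R)\<rceil>) = 2 powr (real (2 * k))" unfolding kk by simp
    also have "\<dots> = 2 ^ (2 * k)" by (rule powr_realpow) simp
    also have "\<dots> = (2 ^ k) ^ 2" by (simp add: power_mult[symmetric] mult.commute)
    finally show ?thesis .
  qed
  have "real R = 2 powr (log 2 (real R))" using assms(6) by simp
  also have "\<dots> \<le> 2 powr (real k)" unfolding kk[symmetric] by (intro powr_mono) auto
  also have "\<dots> = 2 ^ k" by (simp add: powr_realpow)
  finally have "real R \<le> 2 ^ k" .
  then have RK: "R \<le> 2 ^ k" by (metis of_nat_le_iff of_nat_numeral of_nat_power)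
  define K :: real where "K = 2 ^ k"
  define C :: real where "C = 4 * K ^ 2"
  let ?A = "supp b - {\<one>\<^bsub>G\<^esub>}"
  define Pp where "Pp = {g \<in> ?A. 0 < b g}"
  define Nn where "Nn = {g \<in> ?A. b g < 0}"
  have PNfin: "finite Pp" "finite Nn" using bfin unfolding Pp_def Nn_def by auto
  have PN: "Pp \<union> Nn = ?A" "Pp \<inter> Nn = {}" unfolding Pp_def Nn_def supp_def by auto
  have inball: "g \<in> word_ball G S (2 * R)" if "g \<in> ?A" for g using assms(10) that by auto
  define P where "P = (\<Sum>g\<in>Pp. b g)"
  have nb0: "norm1 b \<ge> 0" unfolding norm1_def by (simp add: sum_nonneg)
  have Ple: "P \<le> norm1 b / 2"
  proof -
    have "P = (\<Sum>g\<in>Pp. (\<bar>b g\<bar> + b g) / 2)" unfolding P_def Pp_def by (intro sum.cong refl) auto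
    also have "\<dots> \<le> (\<Sum>g\<in>supp b. (\<bar>b g\<bar> + b g) / 2)"
      using bfin by (intro sum_mono2) (auto simp: Pp_def)
    also have "\<dots> = (\<Sum>g\<in>supp b. \<bar>b g\<bar> + b g) / 2" by (simp only: sum_divide_distrib)
    also have "\<dots> = norm1 b / 2" using b0 unfolding norm1_def by (simp only: sum.distrib) simp
    finally show ?thesis .
  qed
  have budget: "\<epsilon> - C * P / 2 \<ge> 0"
  proof -
    have "C * P / 2 \<le> C * (norm1 b / 2) / 2" unfolding C_def using Ple by (intro divide_right_mono mult_left_mono) auto
    also have "\<dots> = (2 ^ k) ^ 2 * norm1 b" unfolding C_def K_def by simp
    also have "\<dots> \<le> \<epsilon>" using assms(12) pw by simp
    finally show ?thesis by simp
  qed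
  have lapsos: "laplacian G S \<in> sos_R G S R"
  proof -
    have "(\<lambda>y. \<Sum>t\<in>S. Qf G t y) \<in> sos_R G S R" by (rule sos_sum[OF finS]) (use Qt_sos in auto)
    then have "(\<lambda>y. (1/2) * (\<Sum>t\<in>S. Qf G t y)) \<in> sos_R G S R" by (rule sos_scale) simp
    then show ?thesis by (rule sos_ext[rotated]) (rule lap)
  qed
  have F1: "(\<lambda>y. \<Sum>g\<in>Nn. (- b g / 2) * Qf G g y) \<in> sos_R G S R"
  proof (rule sos_sum[OF PNfin(2)], intro ballI)
    fix g assume g: "g \<in> Nn"
    then have "g \<in> ?A" "b g < 0" unfolding Nn_def by auto
    then show "(\<lambda>y. (- b g / 2) * Qf G g y) \<in> sos_R G S R"
      by (intro sos_scale Q_sos inball) auto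
  qed
  have F2: "(\<lambda>y. \<Sum>g\<in>Pp. (b g / 2) * (C * laplacian G S y - Qf G g y)) \<in> sos_R G S R"
  proof (rule sos_sum[OF PNfin(1)], intro ballI)
    fix g assume g: "g \<in> Pp"
    then have "g \<in> ?A" "b g > 0" unfolding Pp_def by auto
    then show "(\<lambda>y. (b g / 2) * (C * laplacian G S y - Qf G g y)) \<in> sos_R G S R"
      unfolding C_def K_def using core[OF inball RK] by (intro sos_scale) auto
  qed
  have F3: "(\<lambda>y. (\<epsilon> - C * P / 2) * laplacian G S y) \<in> sos_R G S R"
    by (rule sos_scale[OF lapsos budget])
  have F12: "(\<lambda>y. (\<Sum>g\<in>Nn. (- b g / 2) * Qf G g y) + (\<Sum>g\<in>Pp. (b g / 2) * (C * laplacian G S y - Qf G g y))) \<in> sos_R G S R"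
    by (rule sos_add[OF F1 F2])
  have F123: "(\<lambda>y. ((\<Sum>g\<in>Nn. (- b g / 2) * Qf G g y) + (\<Sum>g\<in>Pp. (b g / 2) * (C * laplacian G S y - Qf G g y)))
      + (\<epsilon> - C * P / 2) * laplacian G S y) \<in> sos_R G S R"
    by (rule sos_add[OF F12 F3])
  have all: "(\<lambda>y. \<sigma> y + (((\<Sum>g\<in>Nn. (- b g / 2) * Qf G g y) + (\<Sum>g\<in>Pp. (b g / 2) * (C * laplacian G S y - Qf G g y)))
      + (\<epsilon> - C * P / 2) * laplacian G S y)) \<in> sos_R G S R"
    by (rule sos_add[OF \<sigma>sos F123])
  have sosT: "(\<lambda>g. x g + \<epsilon> * laplacian G S g) \<in> sos_R G S R"
  proof (rule sos_ext[OF _ all])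
    fix y
    have dA: "(\<Sum>g\<in>?A. (- b g / 2) * Qf G g y) = b y" by (rule decomp[OF assms(9) bsym b0])
    have sA: "(\<Sum>g\<in>?A. (- b g / 2) * Qf G g y) = (\<Sum>g\<in>Pp. (- b g / 2) * Qf G g y) + (\<Sum>g\<in>Nn. (- b g / 2) * Qf G g y)"
      unfolding PN(1)[symmetric] by (rule sum.union_disjoint[OF PNfin PN(2)])
    have s2: "(\<Sum>g\<in>Pp. (b g / 2) * (C * laplacian G S y - Qf G g y)) =
        C * P / 2 * laplacian G S y + (\<Sum>g\<in>Pp. (- b g / 2) * Qf G g y)"
      unfolding P_def by (simp add: sum_distrib_left sum_distrib_right sum.distrib sum_subtractf algebra_simps sum_divide_distrib sum_negf)
    show "x y + \<epsilon> * laplacian G S y = \<sigma> y + (((\<Sum>g\<in>Nn. (- b g / 2) * Qf G g y) + (\<Sum>g\<in>Pp. (b g / 2) * (C * laplacian G S y - Qf G g y)))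
      + (\<epsilon> - C * P / 2) * laplacian G S y)"
      unfolding s2 \<sigma>_def using dA sA by (simp add: algebra_simps)
  qed
  define F' where "F' = supp x \<union> insert \<one>\<^bsub>G\<^esub> S"
  have F'fin: "finite F'" using xfin finS unfolding F'_def by auto
  have F'c: "F' \<subseteq> carrier G" using xfin Sc unfolding F'_def by auto
  have suppT: "supp (\<lambda>g. x g + \<epsilon> * laplacian G S g) \<subseteq> F'"
    unfolding F'_def supp_def laplacian_def by auto
  have ringT: "(\<lambda>g. x g + \<epsilon> * laplacian G S g) \<in> grp_ring G"
    unfolding grp_ring_def using suppT F'fin F'c by (auto intro: finite_subset)
  have lsum: "(\<Sum>g\<in>F'. laplacian G S g) = 0"
  proof -
    have "(\<Sum>g\<in>F'. laplacian G S g) = (\<Sum>g\<in>F'. (if g = \<one>\<^bsub>G\<^esub> then real (card S) else 0)) - (\<Sum>g\<in>F'. (if g \<in> S then 1 else 0))"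
      unfolding laplacian_def by (simp add: sum_subtractf)
    also have "(\<Sum>g\<in>F'. (if g = \<one>\<^bsub>G\<^esub> then real (card S) else 0)) = real (card S)"
      using F'fin by (simp add: sum.delta F'_def)
    also have "(\<Sum>g\<in>F'. (if g \<in> S then 1 else 0)) = (\<Sum>g\<in>S. (1::real))"
      using F'fin by (intro sum.mono_neutral_cong_right) (auto simp: F'_def)
    finally show ?thesis by simp
  qed
  have "augmentation (\<lambda>g. x g + \<epsilon> * laplacian G S g) = (\<Sum>g\<in>F'. x g + \<epsilon> * laplacian G S g)"
    by (rule aug_eq[OF F'fin suppT])
  also have "\<dots> = augmentation x + \<epsilon> * (\<Sum>g\<in>F'. laplacian G S g)"
  proof -
    have "augmentation x = sum x F'" by (rule aug_eq[OF F'fin]) (auto simp: F'_def)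
    then show ?thesis by (simp add: sum.distrib sum_distrib_left)
  qed
  also have "\<dots> = 0" using xa lsum by simp
  finally have augT: "augmentation (\<lambda>g. x g + \<epsilon> * laplacian G S g) = 0" .
  show ?thesis unfolding sos_R_IG_def aug_ideal_def using ringT augT sosT by auto
qed


end
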